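(* Let $\mathcal N$ be an orchard network and let $\mathcal N=\mathcal N_0,\mathcal N_1,\dots,\mathcal N_\ell$ be a maximal cherry-reduction sequence of $\mathcal N$. Then this sequence is complete, i.e. $\mathcal N_\ell$ consists of a single vertex.
   Context: A phylogenetic network on $X$ ($X$ non-empty finite) is a rooted acyclic directed graph with no parallel arcs such that: the unique root has in-degree $0$ and out-degree $2$; every vertex of out-degree $0$ has in-degree $1$, and the set of such vertices (leaves) is $X$; every other vertex has either in-degree $1$ and out-degree $2$ (tree vertex) or in-degree $2$ and out-degree $1$ (reticulation). If $|X|=1$ a single vertex is also allowed. For a $2$-element subset $\{a,b\}\subseteq X$ with parents $p_a,p_b$: $\{a,b\}$ is a cherry if $p_a=p_b$; it is a reticulated cherry with reticulation leaf $b$ if $p_b$ is a reticulation and $(p_a,p_b)$ is an arc. Reducing $b$ in a cherry means deleting $b$ and suppressing the resulting vertex of in-degree 1 and out-degree 1 (if the common parent is the root, delete $b$ and the root, leaving the single vertex $a$). Cutting a reticulated cherry $\{a,b\}$ means deleting the arc $(p_a,p_b)$ and suppressing the two resulting vertices of in-degree 1 and out-degree 1. These are cherry reductions. A cherry-reduction sequence of $\mathcal N$ is a sequence $\mathcal N=\mathcal N_0,\dots,\mathcal N_k$ where each $\mathcal N_i$ is obtained from $\mathcal N_{i-1}$ by one cherry reduction; it is maximal if $\mathcal N_k$ has no cherries and no reticulated cherries, and complete if $\mathcal N_k$ is a single vertex. $\mathcal N$ is an orchard network if it has a complete cherry-reduction sequence. *)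

theory Defs
  imports Main
begin

text \<open>Arcs form a set, so parallel arcs are excluded by construction.  Leaves are
  identified with their labels, so the leaf set X is the set of out-degree-0 vertices.\<close>

type_synonym 'v network = "'v set \<times> ('v \<times> 'v) set"

definition indeg :: "('v \<times> 'v) set \<Rightarrow> 'v \<Rightarrow> nat" where
  "indeg A v = card {u. (u, v) \<in> A}"

definition outdeg :: "('v \<times> 'v) set \<Rightarrow> 'v \<Rightarrow> nat" where
  "outdeg A v = card {w. (v, w) \<in> A}"

definition leaves :: "'v network \<Rightarrow> 'v set" where
  "leaves N = {v \<in> fst N. outdeg (snd N) v = 0}"

definition is_reticulation :: "'v network \<Rightarrow> 'v \<Rightarrow> bool" where
  "is_reticulation N v \<longleftrightarrow> v \<in> fst N \<and> indeg (snd N) v = 2 \<and> outdeg (snd N) v = 1"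

definition is_tree_vertex :: "'v network \<Rightarrow> 'v \<Rightarrow> bool" where
  "is_tree_vertex N v \<longleftrightarrow> v \<in> fst N \<and> indeg (snd N) v = 1 \<and> outdeg (snd N) v = 2"

definition phylo_network :: "'v network \<Rightarrow> bool" where
  "phylo_network N \<longleftrightarrow>
     (let V = fst N; A = snd N in
       finite V \<and> A \<subseteq> V \<times> V \<and>
       ((\<exists>x. V = {x} \<and> A = {}) \<or>
        (acyclic A \<and>
         (\<exists>r \<in> V. indeg A r = 0 \<and> outdeg A r = 2 \<and>
            (\<forall>v \<in> V. v \<noteq> r \<longrightarrow>
               (outdeg A v = 0 \<and> indeg A v = 1) \<or>
               (indeg A v = 1 \<and> outdeg A v = 2) \<or>
               (indeg A v = 2 \<and> outdeg A v = 1))))))"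

definition parent :: "'v network \<Rightarrow> 'v \<Rightarrow> 'v" where
  "parent N v = (THE p. (p, v) \<in> snd N)"

definition is_cherry :: "'v network \<Rightarrow> 'v \<Rightarrow> 'v \<Rightarrow> bool" where
  "is_cherry N a b \<longleftrightarrow> a \<noteq> b \<and> a \<in> leaves N \<and> b \<in> leaves N \<and> parent N a = parent N b"

definition is_ret_cherry :: "'v network \<Rightarrow> 'v \<Rightarrow> 'v \<Rightarrow> bool" where
  "is_ret_cherry N a b \<longleftrightarrow> a \<noteq> b \<and> a \<in> leaves N \<and> b \<in> leaves N \<and>
     is_reticulation N (parent N b) \<and> (parent N a, parent N b) \<in> snd N"

definition suppress :: "'v network \<Rightarrow> 'v \<Rightarrow> 'v network" where
  "suppress N u = (fst N - {u},
     {(x, y). (x, y) \<in> snd N \<and> x \<noteq> u \<and> y \<noteq> u} \<union>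
     {(p, c). (p, u) \<in> snd N \<and> (u, c) \<in> snd N})"

definition delete_vertices :: "'v network \<Rightarrow> 'v set \<Rightarrow> 'v network" where
  "delete_vertices N S = (fst N - S, {(x, y). (x, y) \<in> snd N \<and> x \<notin> S \<and> y \<notin> S})"

definition reduce_cherry :: "'v network \<Rightarrow> 'v \<Rightarrow> 'v network" where
  "reduce_cherry N b =
     (let p = parent N b in
       if indeg (snd N) p = 0 then delete_vertices N {b, p}
       else suppress (delete_vertices N {b}) p)"

definition cut_ret_cherry :: "'v network \<Rightarrow> 'v \<Rightarrow> 'v \<Rightarrow> 'v network" where
  "cut_ret_cherry N a b =
     (let pa = parent N a; pb = parent N b in
       suppress (suppress (fst N, snd N - {(pa, pb)}) pa) pb)"

definition cherry_reduction :: "'v network \<Rightarrow> 'v network \<Rightarrow> bool" where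
  "cherry_reduction N N' \<longleftrightarrow>
     (\<exists>a b. is_cherry N a b \<and> N' = reduce_cherry N b) \<or>
     (\<exists>a b. is_ret_cherry N a b \<and> N' = cut_ret_cherry N a b)"

definition cherry_reduction_seq :: "'v network \<Rightarrow> (nat \<Rightarrow> 'v network) \<Rightarrow> nat \<Rightarrow> bool" where
  "cherry_reduction_seq N Ns k \<longleftrightarrow>
     Ns 0 = N \<and> (\<forall>i < k. cherry_reduction (Ns i) (Ns (Suc i)))"

definition no_cherries :: "'v network \<Rightarrow> bool" where
  "no_cherries N \<longleftrightarrow> \<not> (\<exists>a b. is_cherry N a b) \<and> \<not> (\<exists>a b. is_ret_cherry N a b)"

definition maximal_seq :: "'v network \<Rightarrow> (nat \<Rightarrow> 'v network) \<Rightarrow> nat \<Rightarrow> bool" where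
  "maximal_seq N Ns k \<longleftrightarrow> cherry_reduction_seq N Ns k \<and> no_cherries (Ns k)"

definition single_vertex :: "'v network \<Rightarrow> bool" where
  "single_vertex N \<longleftrightarrow> (\<exists>v. N = ({v}, {}))"

definition complete_seq :: "'v network \<Rightarrow> (nat \<Rightarrow> 'v network) \<Rightarrow> nat \<Rightarrow> bool" where
  "complete_seq N Ns k \<longleftrightarrow> cherry_reduction_seq N Ns k \<and> single_vertex (Ns k)"

definition orchard :: "'v network \<Rightarrow> bool" where
  "orchard N \<longleftrightarrow> phylo_network N \<and> (\<exists>Ns k. complete_seq N Ns k)"

end

theory Submission
  imports Defs
begin


definition CH :: "'v set \<Rightarrow> ('v \<times> 'v) set \<Rightarrow> 'v \<Rightarrow> 'v \<Rightarrow> 'v \<Rightarrow> 'v \<Rightarrow> bool" where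
"CH V A a b p g \<longleftrightarrow> a \<noteq> b \<and> a \<in> V \<and> b \<in> V \<and> p \<in> V \<and> (\<forall>w. (a,w) \<notin> A) \<and> (\<forall>w. (b,w) \<notin> A)
   \<and> (\<forall>u. (u,a) \<in> A \<longleftrightarrow> u = p) \<and> (\<forall>u. (u,b) \<in> A \<longleftrightarrow> u = p)
   \<and> (\<forall>w. (p,w) \<in> A \<longleftrightarrow> w = a \<or> w = b) \<and> (\<forall>u. (u,p) \<in> A \<longleftrightarrow> u = g)"

definition RC :: "'v set \<Rightarrow> ('v \<times> 'v) set \<Rightarrow> 'v \<Rightarrow> 'v \<Rightarrow> 'v \<Rightarrow> 'v \<Rightarrow> 'v \<Rightarrow> 'v \<Rightarrow> bool" where
"RC V A a b pa pb ga q \<longleftrightarrow> a \<noteq> b \<and> a \<in> V \<and> b \<in> V \<and> pa \<in> V \<and> pb \<in> V \<and> (\<forall>w. (a,w) \<notin> A) \<and> (\<forall>w. (b,w) \<notin> A)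
   \<and> (\<forall>u. (u,a) \<in> A \<longleftrightarrow> u = pa) \<and> (\<forall>u. (u,b) \<in> A \<longleftrightarrow> u = pb)
   \<and> (\<forall>w. (pa,w) \<in> A \<longleftrightarrow> w = a \<or> w = pb) \<and> (\<forall>u. (u,pa) \<in> A \<longleftrightarrow> u = ga)
   \<and> (\<forall>u. (u,pb) \<in> A \<longleftrightarrow> u = pa \<or> u = q) \<and> pa \<noteq> q \<and> (\<forall>w. (pb,w) \<in> A \<longleftrightarrow> w = b)"

definition redF :: "'v set \<Rightarrow> ('v \<times> 'v) set \<Rightarrow> 'v \<Rightarrow> 'v \<Rightarrow> 'v \<Rightarrow> 'v \<Rightarrow> 'v network" where
"redF V A a b p g = (V - {b,p}, A - {(g,p),(p,a),(p,b)} \<union> {(g,a)})"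

definition cutF :: "'v set \<Rightarrow> ('v \<times> 'v) set \<Rightarrow> 'v \<Rightarrow> 'v \<Rightarrow> 'v \<Rightarrow> 'v \<Rightarrow> 'v \<Rightarrow> 'v \<Rightarrow> 'v network" where
"cutF V A a b pa pb ga q = (V - {pa,pb}, A - {(ga,pa),(pa,a),(pa,pb),(q,pb),(pb,b)} \<union> {(ga,a),(q,b)})"

lemma parent_eq: "(\<forall>u. (u,v) \<in> snd N \<longleftrightarrow> u = p) \<Longrightarrow> parent N v = p"
  unfolding parent_def by auto

lemma card_in1: "(\<forall>u. (u,v) \<in> A \<longleftrightarrow> u = p) \<Longrightarrow> indeg A v = 1"
proof -
  assume "\<forall>u. (u,v) \<in> A \<longleftrightarrow> u = p"
  then have "{u. (u,v) \<in> A} = {p}" by auto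
  then show ?thesis unfolding indeg_def by simp
qed

lemma suppress_formula:
  assumes "\<forall>u. (u,x) \<in> A \<longleftrightarrow> u = s" "\<forall>w. (x,w) \<in> A \<longleftrightarrow> w = t"
  shows "suppress (V,A) x = (V - {x}, A - {(s,x),(x,t)} \<union> {(s,t)})"
proof -
  have "{(y, z). (y, z) \<in> A \<and> y \<noteq> x \<and> z \<noteq> x} = A - {(s,x),(x,t)}" using assms by auto
  moreover have "{(y, z). (y, x) \<in> A \<and> (x, z) \<in> A} = {(s,t)}" using assms by auto
  ultimately show ?thesis unfolding suppress_def by simp
qed

lemma delete_leaf:
  assumes "\<forall>w. (b,w) \<notin> A" "\<forall>u. (u,b) \<in> A \<longleftrightarrow> u = p"
  shows "delete_vertices (V,A) {b} = (V - {b}, A - {(p,b)})"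
proof -
  have "{(x, y). (x, y) \<in> A \<and> x \<notin> {b} \<and> y \<notin> {b}} = A - {(p,b)}" using assms by auto
  then show ?thesis unfolding delete_vertices_def by simp
qed

lemma out0: "\<forall>w. (a,w) \<notin> A \<Longrightarrow> outdeg A a = 0"
  unfolding outdeg_def by simp

lemma out1: "(\<forall>w. (v,w) \<in> A \<longleftrightarrow> w = c) \<Longrightarrow> outdeg A v = 1"
proof -
  assume "\<forall>w. (v,w) \<in> A \<longleftrightarrow> w = c"
  then have "{w. (v,w) \<in> A} = {c}" by blast
  then show ?thesis unfolding outdeg_def by simp
qed

lemma in2: "(\<forall>u. (u,v) \<in> A \<longleftrightarrow> u = x \<or> u = y) \<Longrightarrow> x \<noteq> y \<Longrightarrow> indeg A v = 2"
proof -
  assume "\<forall>u. (u,v) \<in> A \<longleftrightarrow> u = x \<or> u = y" "x \<noteq> y"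
  then have "{u. (u,v) \<in> A} = {x,y}" by blast
  then show ?thesis unfolding indeg_def using \<open>x \<noteq> y\<close> by simp
qed

lemma out2: "(\<forall>u. (v,u) \<in> A \<longleftrightarrow> u = x \<or> u = y) \<Longrightarrow> x \<noteq> y \<Longrightarrow> outdeg A v = 2"
proof -
  assume "\<forall>u. (v,u) \<in> A \<longleftrightarrow> u = x \<or> u = y" "x \<noteq> y"
  then have "{u. (v,u) \<in> A} = {x,y}" by blast
  then show ?thesis unfolding outdeg_def using \<open>x \<noteq> y\<close> by simp
qed

lemma CH_red:
  assumes "CH V A a b p g"
  shows "is_cherry (V,A) a b" "reduce_cherry (V,A) b = redF V A a b p g"
proof -
  note c = assms[unfolded CH_def]
  have "\<forall>u. (u,a) \<in> snd (V,A) \<longleftrightarrow> u = p" unfolding snd_conv using c by blast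
  note p1 = parent_eq[OF this]
  have "\<forall>u. (u,b) \<in> snd (V,A) \<longleftrightarrow> u = p" unfolding snd_conv using c by blast
  note p2 = parent_eq[OF this]
  note pa = p1 p2
  have "outdeg A a = 0" "outdeg A b = 0" using c by (intro out0; blast)+
  then show "is_cherry (V,A) a b" using c pa unfolding is_cherry_def leaves_def by simp
  have i: "indeg A p = 1" using c by (intro card_in1) blast
  have d: "delete_vertices (V,A) {b} = (V - {b}, A - {(p,b)})"
    using c by (intro delete_leaf) blast+
  have "suppress (V - {b}, A - {(p,b)}) p = (V - {b} - {p}, A - {(p,b)} - {(g,p),(p,a)} \<union> {(g,a)})"
    by (rule suppress_formula[where s=g and t=a]) (use c in blast)+
  moreover have "V - {b} - {p} = V - {b,p}" by blast
  moreover have "A - {(p,b)} - {(g,p),(p,a)} = A - {(g,p),(p,a),(p,b)}" by blast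
  ultimately show "reduce_cherry (V,A) b = redF V A a b p g"
    using pa d i unfolding reduce_cherry_def redF_def Let_def
    by simp
qed

lemma CH_D: assumes "CH V A a b p g"
  shows "a \<noteq> b" "a \<in> V" "b \<in> V" "p \<in> V" "\<And>w. (a,w) \<notin> A" "\<And>w. (b,w) \<notin> A"
   "\<And>u. (u,a) \<in> A \<longleftrightarrow> u = p" "\<And>u. (u,b) \<in> A \<longleftrightarrow> u = p"
   "\<And>w. (p,w) \<in> A \<longleftrightarrow> w = a \<or> w = b" "\<And>u. (u,p) \<in> A \<longleftrightarrow> u = g"
  using assms unfolding CH_def by simp_all

lemma CH_dist: assumes "CH V A a b p g"
  shows "a \<noteq> p" "b \<noteq> p" "g \<noteq> p" "g \<noteq> a" "g \<noteq> b"
proof -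
  note d = CH_D[OF assms]
  have e: "(p,a) \<in> A" "(p,b) \<in> A" "(g,p) \<in> A" using d by auto
  show "a \<noteq> p" using e(1) d(5) by metis
  show "b \<noteq> p" using e(2) d(6) by metis
  show "g \<noteq> p" using e(3) d(9) d(5) d(6) by metis
  show "g \<noteq> a" using e(3) d(5) by metis
  show "g \<noteq> b" using e(3) d(6) by metis
qed

lemma RC_D: assumes "RC V A a b pa pb ga q"
  shows "a \<noteq> b" "a \<in> V" "b \<in> V" "pa \<in> V" "pb \<in> V" "\<And>w. (a,w) \<notin> A" "\<And>w. (b,w) \<notin> A"
   "\<And>u. (u,a) \<in> A \<longleftrightarrow> u = pa" "\<And>u. (u,b) \<in> A \<longleftrightarrow> u = pb"
   "\<And>w. (pa,w) \<in> A \<longleftrightarrow> w = a \<or> w = pb" "\<And>u. (u,pa) \<in> A \<longleftrightarrow> u = ga"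
   "\<And>u. (u,pb) \<in> A \<longleftrightarrow> u = pa \<or> u = q" "pa \<noteq> q" "\<And>w. (pb,w) \<in> A \<longleftrightarrow> w = b"
  using assms unfolding RC_def by simp_all

lemma RC_dist: assumes "RC V A a b pa pb ga q"
  shows "a \<noteq> pa" "a \<noteq> pb" "b \<noteq> pa" "b \<noteq> pb" "pa \<noteq> pb" "ga \<noteq> pa" "ga \<noteq> pb" "ga \<noteq> a" "ga \<noteq> b"
    "q \<noteq> pb" "q \<noteq> a" "q \<noteq> b"
proof -
  note d = RC_D[OF assms]
  have e: "(pa,a) \<in> A" "(pa,pb) \<in> A" "(pb,b) \<in> A" "(ga,pa) \<in> A" "(q,pb) \<in> A" using d by auto
  show "a \<noteq> pa" using e(1) d(6) by metis
  show "a \<noteq> pb" using e(3) d(6) by metis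
  show "b \<noteq> pa" using e(1) d(7) by metis
  show "b \<noteq> pb" using e(3) d(7) by metis
  show "pa \<noteq> pb" using d(10) d(14) d(1) by metis
  show "ga \<noteq> pa" using e(4) d(10) d(6) d(14) d(1) by metis
  show "ga \<noteq> pb" using e(4) d(14) d(7) e(1) by metis
  show "ga \<noteq> a" using e(4) d(6) by metis
  show "ga \<noteq> b" using e(4) d(7) by metis
  show "q \<noteq> pb" using e(5) d(14) d(7) e(3) by metis
  show "q \<noteq> a" using e(5) d(6) by metis
  show "q \<noteq> b" using e(5) d(7) by metis
qed

lemma RC_cut:
  assumes "RC V A a b pa pb ga q"
  shows "is_ret_cherry (V,A) a b" "cut_ret_cherry (V,A) a b = cutF V A a b pa pb ga q"
proof -
  note d = RC_D[OF assms] and n = RC_dist[OF assms]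
  have pa: "parent (V,A) a = pa" "parent (V,A) b = pb" by (rule parent_eq; simp add: d)+
  have "outdeg A a = 0" "outdeg A b = 0" by (rule out0; simp add: d)+
  moreover have "outdeg A pb = 1" by (rule out1[where c=b]; simp add: d)
  moreover have "indeg A pb = 2" by (rule in2[where x=pa and y=q]; simp add: d)
  moreover have "(pa,pb) \<in> A" by (simp add: d)
  ultimately show "is_ret_cherry (V,A) a b" using d pa
    unfolding is_ret_cherry_def leaves_def is_reticulation_def by simp
  have s1: "suppress (V, A - {(pa,pb)}) pa = (V - {pa}, A - {(pa,pb)} - {(ga,pa),(pa,a)} \<union> {(ga,a)})"
    by (rule suppress_formula[where s=ga and t=a]) (auto simp: d n n[THEN not_sym] d(1) d(13) d(1)[THEN not_sym] d(13)[THEN not_sym])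
  have s2: "suppress (V - {pa}, A - {(pa,pb)} - {(ga,pa),(pa,a)} \<union> {(ga,a)}) pb =
     (V - {pa} - {pb}, A - {(pa,pb)} - {(ga,pa),(pa,a)} \<union> {(ga,a)} - {(q,pb),(pb,b)} \<union> {(q,b)})"
    by (rule suppress_formula[where s=q and t=b]) (auto simp: d n n[THEN not_sym] d(1) d(13) d(1)[THEN not_sym] d(13)[THEN not_sym])
  have "V - {pa} - {pb} = V - {pa,pb}" by blast
  moreover have "A - {(pa,pb)} - {(ga,pa),(pa,a)} \<union> {(ga,a)} - {(q,pb),(pb,b)} \<union> {(q,b)}
     = A - {(ga,pa),(pa,a),(pa,pb),(q,pb),(pb,b)} \<union> {(ga,a),(q,b)}"
    using n d(1) by auto
  ultimately show "cut_ret_cherry (V,A) a b = cutF V A a b pa pb ga q"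
    using pa s1 s2 unfolding cut_ret_cherry_def cutF_def Let_def by simp
qed


definition PN :: "'v set \<Rightarrow> ('v \<times> 'v) set \<Rightarrow> 'v \<Rightarrow> bool" where
"PN V A r \<longleftrightarrow> finite V \<and> A \<subseteq> V \<times> V \<and> acyclic A \<and> r \<in> V \<and> indeg A r = 0 \<and> outdeg A r = 2 \<and>
            (\<forall>v \<in> V. v \<noteq> r \<longrightarrow>
               (outdeg A v = 0 \<and> indeg A v = 1) \<or>
               (indeg A v = 1 \<and> outdeg A v = 2) \<or>
               (indeg A v = 2 \<and> outdeg A v = 1))"

lemma phylo_iff: "phylo_network (V,A) \<longleftrightarrow> (\<exists>x. V = {x} \<and> A = {}) \<or> (\<exists>r. PN V A r)"
  unfolding phylo_network_def PN_def Let_def fst_conv snd_conv by auto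

lemma PN_D: assumes "PN V A r"
  shows "finite V" "A \<subseteq> V \<times> V" "acyclic A" "r \<in> V" "indeg A r = 0" "outdeg A r = 2"
   "\<And>v. v \<in> V \<Longrightarrow> v \<noteq> r \<Longrightarrow> (outdeg A v = 0 \<and> indeg A v = 1) \<or>
               (indeg A v = 1 \<and> outdeg A v = 2) \<or>
               (indeg A v = 2 \<and> outdeg A v = 1)"
  using assms unfolding PN_def by simp_all

lemma PN_finA: "PN V A r \<Longrightarrow> finite A"
  unfolding PN_def using finite_subset finite_cartesian_product by blast

lemma PN_fin_in: "PN V A r \<Longrightarrow> finite {u. (u,v) \<in> A}"
proof -
  assume "PN V A r"
  then have "finite A" by (rule PN_finA)
  then have "finite (fst ` A)" by simp
  moreover have "{u. (u,v) \<in> A} \<subseteq> fst ` A" by force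
  ultimately show ?thesis using finite_subset by blast
qed

lemma PN_fin_out: "PN V A r \<Longrightarrow> finite {u. (v,u) \<in> A}"
proof -
  assume "PN V A r"
  then have "finite A" by (rule PN_finA)
  then have "finite (snd ` A)" by simp
  moreover have "{u. (v,u) \<in> A} \<subseteq> snd ` A" by force
  ultimately show ?thesis using finite_subset by blast
qed

lemma PN_root_in: "PN V A r \<Longrightarrow> (u,r) \<notin> A"
proof
  assume "PN V A r" "(u,r) \<in> A"
  then have "card {u. (u,r) \<in> A} = 0" unfolding PN_def indeg_def by blast
  moreover have "finite {u. (u,r) \<in> A}" using \<open>PN V A r\<close> by (rule PN_fin_in)
  ultimately have "{u. (u,r) \<in> A} = {}" by simp
  then show False using \<open>(u,r) \<in> A\<close> by blast
qed

lemma PN_nonroot_par: "PN V A r \<Longrightarrow> v \<in> V \<Longrightarrow> v \<noteq> r \<Longrightarrow> \<exists>u. (u,v) \<in> A"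
proof -
  assume a: "PN V A r" "v \<in> V" "v \<noteq> r"
  then have "indeg A v \<noteq> 0" unfolding PN_def by auto
  then have "{u. (u,v) \<in> A} \<noteq> {}" unfolding indeg_def by (metis card.empty)
  then show ?thesis by blast
qed

lemma PN_reach: assumes "PN V A r" "v \<in> V" shows "(r,v) \<in> A\<^sup>*"
proof -
  have "finite A" by (rule PN_finA[OF assms(1)])
  moreover have "acyclic A" using assms(1) unfolding PN_def by simp
  ultimately have "wf A" by (rule finite_acyclic_wf)
  then show ?thesis using assms(2)
  proof (induction v rule: wf_induct_rule)
    case (less v)
    show ?case
    proof (cases "v = r")
      case True then show ?thesis by simp
    next
      case False
      obtain u where u: "(u,v) \<in> A" using PN_nonroot_par[OF assms(1) less.prems False] by blast
      have "A \<subseteq> V \<times> V" using assms(1) unfolding PN_def by simp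
      then have "u \<in> V" using u by blast
      then have "(r,u) \<in> A\<^sup>*" using less.IH[OF u] by simp
      then show ?thesis using u by simp
    qed
  qed
qed

lemma card2_eq: "card S = 2 \<Longrightarrow> x \<in> S \<Longrightarrow> y \<in> S \<Longrightarrow> x \<noteq> y \<Longrightarrow> S = {x,y}"
  by (auto simp: card_2_iff)

lemma card1_eq: "card S = 1 \<Longrightarrow> x \<in> S \<Longrightarrow> S = {x}"
  by (auto simp: card_1_singleton_iff)

lemma PN_leaf_par:
  assumes "PN V A r" "v \<in> V" "\<forall>w. (v,w) \<notin> A"
  shows "\<exists>p. \<forall>u. (u,v) \<in> A \<longleftrightarrow> u = p"
proof -
  have o: "outdeg A v = 0" using assms(3) by (rule out0)
  then have "v \<noteq> r" using PN_D(6)[OF assms(1)] by auto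
  then have "indeg A v = 1" using PN_D(7)[OF assms(1,2)] o by auto
  then obtain p where "{u. (u,v) \<in> A} = {p}" unfolding indeg_def by (auto simp: card_1_singleton_iff)
  then show ?thesis by blast
qed

lemma PN_out2:
  assumes "PN V A r" "(v,x) \<in> A" "(v,y) \<in> A" "x \<noteq> y"
  shows "\<forall>w. (v,w) \<in> A \<longleftrightarrow> w = x \<or> w = y"
    and "v = r \<or> (\<exists>g. \<forall>u. (u,v) \<in> A \<longleftrightarrow> u = g)"
proof -
  note P = PN_D[OF assms(1)]
  have v: "v \<in> V" using assms(2) P(2) by blast
  have f: "finite {w. (v,w) \<in> A}" using assms(1) by (rule PN_fin_out)
  have "card {x,y} \<le> card {w. (v,w) \<in> A}" by (rule card_mono[OF f]) (use assms(2,3) in blast)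
  moreover have "card {x,y} = 2" using assms(4) by simp
  ultimately have ge: "outdeg A v \<ge> 2" unfolding outdeg_def by simp
  have d: "v = r \<or> (indeg A v = 1 \<and> outdeg A v = 2)"
  proof (cases "v = r")
    case False then show ?thesis using P(7)[OF v False] ge by auto
  qed simp
  then have "outdeg A v = 2" using P(6) by auto
  then have "{w. (v,w) \<in> A} = {x,y}" unfolding outdeg_def by (rule card2_eq) (use assms in auto)
  then show "\<forall>w. (v,w) \<in> A \<longleftrightarrow> w = x \<or> w = y" by blast
  show "v = r \<or> (\<exists>g. \<forall>u. (u,v) \<in> A \<longleftrightarrow> u = g)"
  proof (cases "v = r")
    case False
    then have "indeg A v = 1" using d by simp
    then obtain g where "{u. (u,v) \<in> A} = {g}" unfolding indeg_def by (auto simp: card_1_singleton_iff)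
    then show ?thesis by blast
  qed simp
qed

lemma PN_ret:
  assumes "PN V A r" "is_reticulation (V,A) pb" "(pa,pb) \<in> A" "(pb,b) \<in> A"
  shows "\<forall>w. (pb,w) \<in> A \<longleftrightarrow> w = b"
    and "\<exists>q. q \<noteq> pa \<and> (\<forall>u. (u,pb) \<in> A \<longleftrightarrow> u = pa \<or> u = q)"
proof -
  have "outdeg A pb = 1" using assms(2) unfolding is_reticulation_def by simp
  then have "{w. (pb,w) \<in> A} = {b}" unfolding outdeg_def by (rule card1_eq) (use assms(4) in simp)
  then show "\<forall>w. (pb,w) \<in> A \<longleftrightarrow> w = b" by blast
  have "indeg A pb = 2" using assms(2) unfolding is_reticulation_def by simp
  then obtain x y where xy: "{u. (u,pb) \<in> A} = {x,y}" "x \<noteq> y" unfolding indeg_def by (auto simp: card_2_iff)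
  then have "pa = x \<or> pa = y" using assms(3) by blast
  then show "\<exists>q. q \<noteq> pa \<and> (\<forall>u. (u,pb) \<in> A \<longleftrightarrow> u = pa \<or> u = q)"
  proof
    assume "pa = x" then show ?thesis using xy by (intro exI[of _ y]) blast
  next
    assume "pa = y" then show ?thesis using xy by (intro exI[of _ x]) blast
  qed
qed



lemma noout_rtrancl: "(w,v) \<in> A\<^sup>* \<Longrightarrow> (\<And>z. (w,z) \<notin> A) \<Longrightarrow> v = w"
  by (erule converse_rtranclE) auto

lemma PN_out0: assumes "PN V A r" "outdeg A a = 0" shows "\<And>w. (a,w) \<notin> A"
proof -
  have "finite {w. (a,w) \<in> A}" using assms(1) by (rule PN_fin_out)
  then have "{w. (a,w) \<in> A} = {}" using assms(2) unfolding outdeg_def by simp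
  then show "\<And>w. (a,w) \<notin> A" by blast
qed

lemma PN_leaf: assumes "PN V A r" "a \<in> leaves (V,A)"
  obtains p where "a \<in> V" "\<And>w. (a,w) \<notin> A" "\<And>u. (u,a) \<in> A \<longleftrightarrow> u = p" "parent (V,A) a = p"
proof -
  have a: "a \<in> V" "outdeg A a = 0" using assms(2) unfolding leaves_def by auto
  have n: "\<And>w. (a,w) \<notin> A" by (rule PN_out0[OF assms(1) a(2)])
  obtain p where p: "\<forall>u. (u,a) \<in> A \<longleftrightarrow> u = p" using PN_leaf_par[OF assms(1) a(1)] n by blast
  have "parent (V,A) a = p" by (rule parent_eq) (use p in simp)
  then show ?thesis using that a n p by blast
qed

lemma E1:
  assumes P: "PN V A r" and c: "is_cherry (V,A) a b"
  shows "(\<exists>p g. CH V A a b p g) \<or> (r \<noteq> a \<and> r \<noteq> b \<and> a \<noteq> b \<and> V = {r,a,b} \<and> A = {(r,a),(r,b)})"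
proof -
  have ab: "a \<noteq> b" "a \<in> leaves (V,A)" "b \<in> leaves (V,A)" "parent (V,A) a = parent (V,A) b"
    using c unfolding is_cherry_def by auto
  obtain p where pa: "a \<in> V" "\<And>w. (a,w) \<notin> A" "\<And>u. (u,a) \<in> A \<longleftrightarrow> u = p" "parent (V,A) a = p"
    using PN_leaf[OF P ab(2)] by blast
  obtain p' where pb: "b \<in> V" "\<And>w. (b,w) \<notin> A" "\<And>u. (u,b) \<in> A \<longleftrightarrow> u = p'" "parent (V,A) b = p'"
    using PN_leaf[OF P ab(3)] by blast
  have pp: "p' = p" using ab(4) pa(4) pb(4) by simp
  have e: "(p,a) \<in> A" "(p,b) \<in> A" using pa(3) pb(3) pp by auto
  have pV: "p \<in> V" using e(1) PN_D(2)[OF P] by blast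
  have o: "\<forall>w. (p,w) \<in> A \<longleftrightarrow> w = a \<or> w = b" by (rule PN_out2(1)[OF P e ab(1)])
  have "p = r \<or> (\<exists>g. \<forall>u. (u,p) \<in> A \<longleftrightarrow> u = g)" by (rule PN_out2(2)[OF P e ab(1)])
  then show ?thesis
  proof
    assume "\<exists>g. \<forall>u. (u,p) \<in> A \<longleftrightarrow> u = g"
    then obtain g where g: "\<forall>u. (u,p) \<in> A \<longleftrightarrow> u = g" by blast
    have "CH V A a b p g" unfolding CH_def using ab(1) pa pb pp pV o g by simp
    then show ?thesis by blast
  next
    assume pr: "p = r"
    have ra1: "r \<noteq> a" using e(1) pa(2) pr by metis
    have ra2: "r \<noteq> b" using e(2) pb(2) pr by metis
    note ra = ra1 ra2
    have "V \<subseteq> {r,a,b}"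
    proof
      fix v assume v: "v \<in> V"
      have "(r,v) \<in> A\<^sup>*" by (rule PN_reach[OF P v])
      then show "v \<in> {r,a,b}"
      proof (cases rule: converse_rtranclE)
        case (step w)
        then have "w = a \<or> w = b" using o pr by simp
        then show ?thesis
        proof
          assume "w = a" then have "v = a" using noout_rtrancl[OF step(2)] pa(2) by simp
          then show ?thesis by simp
        next
          assume "w = b" then have "v = b" using noout_rtrancl[OF step(2)] pb(2) by simp
          then show ?thesis by simp
        qed
      qed simp
    qed
    then have V: "V = {r,a,b}" using pa(1) pb(1) PN_D(4)[OF P] by blast
    have "A \<subseteq> {(r,a),(r,b)}"
    proof (rule subrelI)
      fix u w assume x: "(u,w) \<in> A"
      then have "u \<in> V" using PN_D(2)[OF P] by blast
      then have "u = r \<or> u = a \<or> u = b" using V by simp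
      moreover have "u \<noteq> a" using x pa(2) by metis
      moreover have "u \<noteq> b" using x pb(2) by metis
      ultimately have "u = r" by simp
      then show "(u,w) \<in> {(r,a),(r,b)}" using o pr x by simp
    qed
    then have "A = {(r,a),(r,b)}" using e pr by blast
    then show ?thesis using ra ab(1) V by blast
  qed
qed

lemma E2:
  assumes P: "PN V A r" and c: "is_ret_cherry (V,A) a b"
  shows "\<exists>pa pb ga q. RC V A a b pa pb ga q"
proof -
  have ab: "a \<noteq> b" "a \<in> leaves (V,A)" "b \<in> leaves (V,A)" "is_reticulation (V,A) (parent (V,A) b)"
     "(parent (V,A) a, parent (V,A) b) \<in> A"
    using c unfolding is_ret_cherry_def by auto
  obtain pa where pa: "a \<in> V" "\<And>w. (a,w) \<notin> A" "\<And>u. (u,a) \<in> A \<longleftrightarrow> u = pa" "parent (V,A) a = pa"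
    using PN_leaf[OF P ab(2)] by blast
  obtain pb where pb: "b \<in> V" "\<And>w. (b,w) \<notin> A" "\<And>u. (u,b) \<in> A \<longleftrightarrow> u = pb" "parent (V,A) b = pb"
    using PN_leaf[OF P ab(3)] by blast
  have e1: "(pa,pb) \<in> A" using ab(5) pa(4) pb(4) by simp
  have e2: "(pb,b) \<in> A" "(pa,a) \<in> A" using pa(3) pb(3) by simp_all
  note e = e1 e2
  have ret: "is_reticulation (V,A) pb" using ab(4) pb(4) by simp
  have ob: "\<forall>w. (pb,w) \<in> A \<longleftrightarrow> w = b" by (rule PN_ret(1)[OF P ret e(1,2)])
  obtain q where q: "q \<noteq> pa" "\<forall>u. (u,pb) \<in> A \<longleftrightarrow> u = pa \<or> u = q"
    using PN_ret(2)[OF P ret e(1,2)] by blast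
  have apb: "a \<noteq> pb" using e(2) pa(2) by metis
  have oa: "\<forall>w. (pa,w) \<in> A \<longleftrightarrow> w = a \<or> w = pb" by (rule PN_out2(1)[OF P e(3) e(1) apb])
  have "pa = r \<or> (\<exists>g. \<forall>u. (u,pa) \<in> A \<longleftrightarrow> u = g)" by (rule PN_out2(2)[OF P e(3) e(1) apb])
  moreover have "pa \<noteq> r"
  proof
    assume pr: "pa = r"
    have qpb: "(q,pb) \<in> A" using q by simp
    then have qV: "q \<in> V" using PN_D(2)[OF P] by blast
    have "(r,q) \<in> A\<^sup>*" by (rule PN_reach[OF P qV])
    then show False
    proof (cases rule: converse_rtranclE)
      case base then show False using q(1) pr by simp
    next
      case (step w)
      then have "w = a \<or> w = pb" using oa pr by simp
      then show False
      proof
        assume "w = a"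
        then have "q = a" using noout_rtrancl[OF step(2)] pa(2) by simp
        then show False using qpb pa(2) by metis
      next
        assume "w = pb"
        then have "(pb,q) \<in> A\<^sup>*" using step(2) by simp
        then have "(pb,pb) \<in> A\<^sup>+" using qpb by (rule rtrancl_into_trancl1)
        then show False using PN_D(3)[OF P] unfolding acyclic_def by simp
      qed
    qed
  qed
  ultimately obtain ga where ga: "\<forall>u. (u,pa) \<in> A \<longleftrightarrow> u = ga" by blast
  have "A \<subseteq> V \<times> V" by (rule PN_D(2)[OF P])
  then have V: "pa \<in> V" "pb \<in> V" using e(1) by auto
  have "RC V A a b pa pb ga q" unfolding RC_def using ab(1) pa pb V oa ga q ob by simp
  then show ?thesis by blast
qed



lemma PN_pres:
  assumes P: "PN V A r" and s: "V' \<subseteq> V" "A' \<subseteq> V' \<times> V'" "A' \<subseteq> A\<^sup>+" "r \<in> V'"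
    and di: "\<And>v. v \<in> V' \<Longrightarrow> indeg A' v = indeg A v"
    and do: "\<And>v. v \<in> V' \<Longrightarrow> outdeg A' v = outdeg A v"
  shows "PN V' A' r"
proof -
  note d = PN_D[OF P]
  have "finite V'" using d(1) s(1) finite_subset by blast
  moreover have "acyclic A'"
  proof -
    have "acyclic (A\<^sup>+)" using d(3) unfolding acyclic_def by simp
    then show ?thesis using s(3) by (rule acyclic_subset)
  qed
  moreover have "indeg A' r = 0" "outdeg A' r = 2" using di[OF s(4)] do[OF s(4)] d(5,6) by simp_all
  moreover have "\<forall>v \<in> V'. v \<noteq> r \<longrightarrow>
               (outdeg A' v = 0 \<and> indeg A' v = 1) \<or>
               (indeg A' v = 1 \<and> outdeg A' v = 2) \<or>
               (indeg A' v = 2 \<and> outdeg A' v = 1)"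
  proof (intro ballI impI)
    fix v assume v: "v \<in> V'" "v \<noteq> r"
    then have "v \<in> V" using s(1) by blast
    then show "(outdeg A' v = 0 \<and> indeg A' v = 1) \<or>
               (indeg A' v = 1 \<and> outdeg A' v = 2) \<or>
               (indeg A' v = 2 \<and> outdeg A' v = 1)" using d(7)[OF _ v(2)] di[OF v(1)] do[OF v(1)] by simp
  qed
  ultimately show ?thesis unfolding PN_def using s(2,4) by simp
qed

lemma card_repl:
  assumes "finite S" "D \<subseteq> S" "I \<inter> S = {}" "finite I" "card I = card D"
  shows "card (S - D \<union> I) = card S"
proof -
  have "finite D" using assms(1,2) finite_subset by blast
  have "card (S - D \<union> I) = card (S - D) + card I"
    by (rule card_Un_disjoint) (use assms in auto)
  also have "card (S - D) = card S - card D" by (rule card_Diff_subset) (use \<open>finite D\<close> assms(2) in auto)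
  also have "card D \<le> card S" by (rule card_mono) (use assms in auto)
  ultimately show ?thesis using assms(5) by simp
qed

lemma out_pres:
  assumes "finite A" "Rm \<subseteq> A" "Ad \<inter> A = {}" "finite Ad"
    "card {x. (v,x) \<in> Ad} = card {x. (v,x) \<in> Rm}"
  shows "outdeg (A - Rm \<union> Ad) v = outdeg A v"
proof -
  have e: "{x. (v,x) \<in> A - Rm \<union> Ad} = {x. (v,x) \<in> A} - {x. (v,x) \<in> Rm} \<union> {x. (v,x) \<in> Ad}" by blast
  have "{x. (v,x) \<in> A} \<subseteq> snd ` A" by force
  then have f: "finite {x. (v,x) \<in> A}" using assms(1) finite_subset finite_imageI by metis
  have "{x. (v,x) \<in> Ad} \<subseteq> snd ` Ad" by force
  then have f2: "finite {x. (v,x) \<in> Ad}" using assms(4) finite_subset finite_imageI by metis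
  show ?thesis unfolding outdeg_def e
    by (rule card_repl[OF f]) (use assms f2 in auto)
qed

lemma in_pres:
  assumes "finite A" "Rm \<subseteq> A" "Ad \<inter> A = {}" "finite Ad"
    "card {x. (x,v) \<in> Ad} = card {x. (x,v) \<in> Rm}"
  shows "indeg (A - Rm \<union> Ad) v = indeg A v"
proof -
  have e: "{x. (x,v) \<in> A - Rm \<union> Ad} = {x. (x,v) \<in> A} - {x. (x,v) \<in> Rm} \<union> {x. (x,v) \<in> Ad}" by blast
  have "{x. (x,v) \<in> A} \<subseteq> fst ` A" by force
  then have f: "finite {x. (x,v) \<in> A}" using assms(1) finite_subset finite_imageI by metis
  have "{x. (x,v) \<in> Ad} \<subseteq> fst ` Ad" by force
  then have f2: "finite {x. (x,v) \<in> Ad}" using assms(4) finite_subset finite_imageI by metis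
  show ?thesis unfolding indeg_def e
    by (rule card_repl[OF f]) (use assms f2 in auto)
qed

lemma PN_red:
  assumes P: "PN V A r" and c: "CH V A a b p g"
  shows "PN (V - {b,p}) (A - {(g,p),(p,a),(p,b)} \<union> {(g,a)}) r"
proof -
  note d = CH_D[OF c] and n = CH_dist[OF c] and pd = PN_D[OF P]
  have fA: "finite A" by (rule PN_finA[OF P])
  have gV: "g \<in> V" using d(10) pd(2) by blast
  have rp: "r \<noteq> p" using d(10)[of g] PN_root_in[OF P] by metis
  have rb: "r \<noteq> b" using d(8)[of p] PN_root_in[OF P] by metis
  have Rm: "{(g,p),(p,a),(p,b)} \<subseteq> A" using d by simp
  have Ad: "{(g,a)} \<inter> A = {}" using d(7) n(3) by auto
  show ?thesis
  proof (rule PN_pres[OF P])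
    show "V - {b, p} \<subseteq> V" by blast
    show "A - {(g,p),(p,a),(p,b)} \<union> {(g,a)} \<subseteq> (V - {b, p}) \<times> (V - {b, p})"
    proof (rule subrelI)
      fix x y assume xy: "(x,y) \<in> A - {(g,p),(p,a),(p,b)} \<union> {(g,a)}"
      then show "(x,y) \<in> (V - {b, p}) \<times> (V - {b, p})"
      proof
        assume "(x,y) \<in> {(g,a)}" then show ?thesis using gV d(1,2) n by auto
      next
        assume xy: "(x,y) \<in> A - {(g,p),(p,a),(p,b)}"
        then have "x \<in> V" "y \<in> V" using pd(2) by auto
        moreover have "x \<noteq> b" "y \<noteq> b" "x \<noteq> p" "y \<noteq> p" using xy d(6,8,9,10) by auto
        ultimately show ?thesis by simp
      qed
    qed
    show "A - {(g,p),(p,a),(p,b)} \<union> {(g,a)} \<subseteq> A\<^sup>+"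
    proof -
      have "(g,a) \<in> A\<^sup>+" using Rm by (meson insert_subset trancl.simps)
      then show ?thesis by auto
    qed
    show "r \<in> V - {b,p}" using pd(4) rp rb by simp
    fix v assume v: "v \<in> V - {b,p}"
    show "indeg (A - {(g,p),(p,a),(p,b)} \<union> {(g,a)}) v = indeg A v"
    proof (rule in_pres[OF fA Rm Ad])
      show "card {x. (x, v) \<in> {(g, a)}} = card {x. (x, v) \<in> {(g, p), (p, a), (p, b)}}"
      proof (cases "v = a")
        case True
        then have "{x. (x, v) \<in> {(g, a)}} = {g}" "{x. (x, v) \<in> {(g, p), (p, a), (p, b)}} = {p}"
          using n d(1) by auto
        then show ?thesis by simp
      next
        case False
        then have "{x. (x, v) \<in> {(g, a)}} = {}" "{x. (x, v) \<in> {(g, p), (p, a), (p, b)}} = {}"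
          using v by auto
        then show ?thesis by simp
      qed
    qed simp
    show "outdeg (A - {(g,p),(p,a),(p,b)} \<union> {(g,a)}) v = outdeg A v"
    proof (rule out_pres[OF fA Rm Ad])
      show "card {x. (v, x) \<in> {(g, a)}} = card {x. (v, x) \<in> {(g, p), (p, a), (p, b)}}"
      proof (cases "v = g")
        case True
        then have "{x. (v, x) \<in> {(g, a)}} = {a}" "{x. (v, x) \<in> {(g, p), (p, a), (p, b)}} = {p}"
          using n v by auto
        then show ?thesis by simp
      next
        case False
        then have "{x. (v, x) \<in> {(g, a)}} = {}" "{x. (v, x) \<in> {(g, p), (p, a), (p, b)}} = {}"
          using v by auto
        then show ?thesis by simp
      qed
    qed simp
  qed
qed

lemma PN_cut:
  assumes P: "PN V A r" and c: "RC V A a b pa pb ga q"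
  shows "PN (V - {pa,pb}) (A - {(ga,pa),(pa,a),(pa,pb),(q,pb),(pb,b)} \<union> {(ga,a),(q,b)}) r"
proof -
  note d = RC_D[OF c] and n = RC_dist[OF c] and pd = PN_D[OF P]
  have fA: "finite A" by (rule PN_finA[OF P])
  have gV: "ga \<in> V" using d(11) pd(2) by blast
  have qV: "q \<in> V" using d(12) pd(2) by blast
  have rp: "r \<noteq> pa" using d(11)[of ga] PN_root_in[OF P] by metis
  have rb: "r \<noteq> pb" using d(12)[of q] PN_root_in[OF P] by metis
  have Rm: "{(ga,pa),(pa,a),(pa,pb),(q,pb),(pb,b)} \<subseteq> A" using d by simp
  have Ad: "{(ga,a),(q,b)} \<inter> A = {}" using d(8,9,13) n by auto
  show ?thesis
  proof (rule PN_pres[OF P])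
    show "V - {pa, pb} \<subseteq> V" by blast
    show "A - {(ga,pa),(pa,a),(pa,pb),(q,pb),(pb,b)} \<union> {(ga,a),(q,b)} \<subseteq> (V - {pa, pb}) \<times> (V - {pa, pb})"
    proof (rule subrelI)
      fix x y assume xy: "(x,y) \<in> A - {(ga,pa),(pa,a),(pa,pb),(q,pb),(pb,b)} \<union> {(ga,a),(q,b)}"
      then show "(x,y) \<in> (V - {pa, pb}) \<times> (V - {pa, pb})"
      proof
        assume "(x,y) \<in> {(ga,a),(q,b)}" then show ?thesis using gV qV d(2,3,13) n by auto
      next
        assume xy: "(x,y) \<in> A - {(ga,pa),(pa,a),(pa,pb),(q,pb),(pb,b)}"
        then have "x \<in> V" "y \<in> V" using pd(2) by auto
        moreover have "x \<noteq> pa" "y \<noteq> pa" "x \<noteq> pb" "y \<noteq> pb" using xy d(10,11,12,14) by auto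
        ultimately show ?thesis by simp
      qed
    qed
    show "A - {(ga,pa),(pa,a),(pa,pb),(q,pb),(pb,b)} \<union> {(ga,a),(q,b)} \<subseteq> A\<^sup>+"
    proof -
      have "(ga,a) \<in> A\<^sup>+" using Rm by (meson insert_subset trancl.simps)
      moreover have "(q,b) \<in> A\<^sup>+" using Rm by (meson insert_subset trancl.simps)
      ultimately show ?thesis by auto
    qed
    show "r \<in> V - {pa,pb}" using pd(4) rp rb by simp
    fix v assume v: "v \<in> V - {pa,pb}"
    show "indeg (A - {(ga,pa),(pa,a),(pa,pb),(q,pb),(pb,b)} \<union> {(ga,a),(q,b)}) v = indeg A v"
    proof (rule in_pres[OF fA Rm Ad])
      show "card {x. (x, v) \<in> {(ga,a),(q,b)}} = card {x. (x, v) \<in> {(ga,pa),(pa,a),(pa,pb),(q,pb),(pb,b)}}"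
      proof (cases "v = a")
        case True
        then have "{x. (x, v) \<in> {(ga,a),(q,b)}} = {ga}" "{x. (x, v) \<in> {(ga,pa),(pa,a),(pa,pb),(q,pb),(pb,b)}} = {pa}"
          using n d(1) by auto
        then show ?thesis by simp
      next
        case F: False
        show ?thesis
        proof (cases "v = b")
          case True
          then have "{x. (x, v) \<in> {(ga,a),(q,b)}} = {q}" "{x. (x, v) \<in> {(ga,pa),(pa,a),(pa,pb),(q,pb),(pb,b)}} = {pb}"
            using n d(1) by auto
          then show ?thesis by simp
        next
          case False
          then have "{x. (x, v) \<in> {(ga,a),(q,b)}} = {}" "{x. (x, v) \<in> {(ga,pa),(pa,a),(pa,pb),(q,pb),(pb,b)}} = {}"
            using v F by auto
          then show ?thesis by simp
        qed
      qed
    qed simp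
    show "outdeg (A - {(ga,pa),(pa,a),(pa,pb),(q,pb),(pb,b)} \<union> {(ga,a),(q,b)}) v = outdeg A v"
    proof (rule out_pres[OF fA Rm Ad])
      have "{x. (v, x) \<in> {(ga,a),(q,b)}} = (if v = ga then {a} else {}) \<union> (if v = q then {b} else {})"
        by auto
      moreover have "{x. (v, x) \<in> {(ga,pa),(pa,a),(pa,pb),(q,pb),(pb,b)}} = (if v = ga then {pa} else {}) \<union> (if v = q then {pb} else {})"
        using v by auto
      ultimately show "card {x. (v, x) \<in> {(ga,a),(q,b)}} = card {x. (v, x) \<in> {(ga,pa),(pa,a),(pa,pb),(q,pb),(pb,b)}}"
        using n d(1) by auto
    qed simp
  qed
qed



lemma root_red:
  assumes "r \<noteq> a" "r \<noteq> b" "a \<noteq> b"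
  shows "is_cherry ({r,a,b}, {(r,a),(r,b)}) a b" "reduce_cherry ({r,a,b}, {(r,a),(r,b)}) b = ({a},{})"
proof -
  have pa: "parent ({r,a,b}, {(r,a),(r,b)}) a = r" "parent ({r,a,b}, {(r,a),(r,b)}) b = r"
    by (rule parent_eq; use assms in auto)+
  have "outdeg {(r,a),(r,b)} a = 0" "outdeg {(r,a),(r,b)} b = 0"
    by (rule out0; use assms in auto)+
  then show "is_cherry ({r,a,b}, {(r,a),(r,b)}) a b" unfolding is_cherry_def leaves_def
    using pa assms by simp
  have "indeg {(r,a),(r,b)} r = 0" unfolding indeg_def using assms by simp
  moreover have "{r,a,b} - {b,r} = {a}" using assms by auto
  moreover have "{(x, y). (x, y) \<in> {(r,a),(r,b)} \<and> x \<notin> {b, r} \<and> y \<notin> {b, r}} = {}" by auto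
  ultimately show "reduce_cherry ({r,a,b}, {(r,a),(r,b)}) b = ({a},{})"
    unfolding reduce_cherry_def Let_def pa delete_vertices_def by simp
qed

lemma classify:
  assumes P: "PN V A r" and c: "cherry_reduction (V,A) N'"
  shows "(\<exists>a b p g. CH V A a b p g \<and> N' = redF V A a b p g) \<or>
         (\<exists>a b pa pb ga q. RC V A a b pa pb ga q \<and> N' = cutF V A a b pa pb ga q) \<or>
         (\<exists>a b. r \<noteq> a \<and> r \<noteq> b \<and> a \<noteq> b \<and> V = {r,a,b} \<and> A = {(r,a),(r,b)} \<and> N' = ({a},{}))"
  using c unfolding cherry_reduction_def
proof (elim disjE exE conjE)
  fix a b assume ch: "is_cherry (V, A) a b" and N': "N' = reduce_cherry (V, A) b"
  from E1[OF P ch] show ?thesis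
  proof (elim disjE exE conjE)
    fix p g assume h: "CH V A a b p g"
    then have "N' = redF V A a b p g" using CH_red(2)[OF h] N' by simp
    then show ?thesis using h by blast
  next
    assume h: "r \<noteq> a" "r \<noteq> b" "a \<noteq> b" "V = {r, a, b}" "A = {(r, a), (r, b)}"
    then have "N' = ({a},{})" using N' root_red(2)[OF h(1-3)] by simp
    then show ?thesis using h by blast
  qed
next
  fix a b assume ch: "is_ret_cherry (V, A) a b" and N': "N' = cut_ret_cherry (V, A) a b"
  from E2[OF P ch] obtain pa pb ga q where h: "RC V A a b pa pb ga q" by blast
  then have "N' = cutF V A a b pa pb ga q" using RC_cut(2)[OF h] N' by simp
  then show ?thesis using h by blast
qed

lemma CH_mono:
  assumes "CH V A c d p g" "{c,d,p} \<subseteq> V'"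
    "\<And>x y. x \<in> {c,d,p} \<or> y \<in> {c,d,p} \<Longrightarrow> (x,y) \<in> A' \<longleftrightarrow> (x,y) \<in> A"
  shows "CH V' A' c d p g"
proof -
  note d = CH_D[OF assms(1)]
  show ?thesis unfolding CH_def
  proof (intro conjI allI)
    show "c \<noteq> d" by (rule d(1))
    show "c \<in> V'" "d \<in> V'" "p \<in> V'" using assms(2) by auto
    fix w
    show "(c,w) \<notin> A'" using assms(3)[of c w] d(5) by simp
    show "(d,w) \<notin> A'" using assms(3)[of d w] d(6) by simp
    show "(w,c) \<in> A' \<longleftrightarrow> w = p" using assms(3)[of w c] d(7) by simp
    show "(w,d) \<in> A' \<longleftrightarrow> w = p" using assms(3)[of w d] d(8) by simp
    show "(p,w) \<in> A' \<longleftrightarrow> w = c \<or> w = d" using assms(3)[of p w] d(9) by simp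
    show "(w,p) \<in> A' \<longleftrightarrow> w = g" using assms(3)[of w p] d(10) by simp
  qed
qed

lemma RC_mono:
  assumes "RC V A c d pc pd gc q" "{c,d,pc,pd} \<subseteq> V'"
    "\<And>x y. x \<in> {c,d,pc,pd} \<or> y \<in> {c,d,pc,pd} \<Longrightarrow> (x,y) \<in> A' \<longleftrightarrow> (x,y) \<in> A"
  shows "RC V' A' c d pc pd gc q"
proof -
  note d = RC_D[OF assms(1)]
  show ?thesis unfolding RC_def
  proof (intro conjI allI)
    show "c \<noteq> d" by (rule d(1))
    show "pc \<noteq> q" by (rule d(13))
    show "c \<in> V'" "d \<in> V'" "pc \<in> V'" "pd \<in> V'" using assms(2) by auto
    fix w
    show "(c,w) \<notin> A'" using assms(3)[of c w] d(6) by simp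
    show "(d,w) \<notin> A'" using assms(3)[of d w] d(7) by simp
    show "(w,c) \<in> A' \<longleftrightarrow> w = pc" using assms(3)[of w c] d(8) by simp
    show "(w,d) \<in> A' \<longleftrightarrow> w = pd" using assms(3)[of w d] d(9) by simp
    show "(pc,w) \<in> A' \<longleftrightarrow> w = c \<or> w = pd" using assms(3)[of pc w] d(10) by simp
    show "(w,pc) \<in> A' \<longleftrightarrow> w = gc" using assms(3)[of w pc] d(11) by simp
    show "(w,pd) \<in> A' \<longleftrightarrow> w = pc \<or> w = q" using assms(3)[of w pd] d(12) by simp
    show "(pd,w) \<in> A' \<longleftrightarrow> w = d" using assms(3)[of pd w] d(14) by simp
  qed
qed

lemma agree:
  assumes "\<And>x y. (x,y) \<in> R \<union> Ad \<Longrightarrow> x \<notin> S \<and> y \<notin> S" "x \<in> S \<or> y \<in> S"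
  shows "(x,y) \<in> A - R \<union> Ad \<longleftrightarrow> (x,y) \<in> A"
  using assms by blast



definition rn :: "('v \<Rightarrow> 'v) \<Rightarrow> 'v network \<Rightarrow> 'v network" where
  "rn f N = (f ` fst N, map_prod f f ` snd N)"

definition sw :: "'v \<Rightarrow> 'v \<Rightarrow> 'v \<Rightarrow> 'v" where
  "sw a b = (\<lambda>x. if x = a then b else if x = b then a else x)"

lemma sw_inv[simp]: "sw a b (sw a b x) = x" unfolding sw_def by auto

lemma bij_sw: "bij (sw a b)" by (rule involuntory_imp_bij) simp

lemma CH_cr: "CH V A a b p g \<Longrightarrow> cherry_reduction (V,A) (redF V A a b p g)"
  unfolding cherry_reduction_def using CH_red by metis

lemma RC_cr: "RC V A a b pa pb ga q \<Longrightarrow> cherry_reduction (V,A) (cutF V A a b pa pb ga q)"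
  unfolding cherry_reduction_def using RC_cut by metis

lemma sw_img: "y \<in> sw a b ` S \<longleftrightarrow> sw a b y \<in> S"
  by (metis image_iff sw_inv)

lemma sw_img2: "(x,y) \<in> map_prod (sw a b) (sw a b) ` S \<longleftrightarrow> (sw a b x, sw a b y) \<in> S"
proof
  assume "(x,y) \<in> map_prod (sw a b) (sw a b) ` S"
  then obtain u v where "(u,v) \<in> S" "x = sw a b u" "y = sw a b v" by auto
  then show "(sw a b x, sw a b y) \<in> S" by simp
next
  assume "(sw a b x, sw a b y) \<in> S"
  then have "map_prod (sw a b) (sw a b) (sw a b x, sw a b y) \<in> map_prod (sw a b) (sw a b) ` S" by blast
  then show "(x,y) \<in> map_prod (sw a b) (sw a b) ` S" by simp
qed

lemma swap_red:
  assumes c: "CH V A a b p g"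
  shows "redF V A b a p g = rn (sw a b) (redF V A a b p g)"
proof -
  note d = CH_D[OF c] and n = CH_dist[OF c]
  have V: "V - {a,p} = sw a b ` (V - {b,p})"
  proof (rule set_eqI)
    fix x show "x \<in> V - {a,p} \<longleftrightarrow> x \<in> sw a b ` (V - {b,p})"
      unfolding sw_img unfolding sw_def using d(1,2,3) n by auto
  qed
  have A: "A - {(g,p),(p,b),(p,a)} \<union> {(g,b)} = map_prod (sw a b) (sw a b) ` (A - {(g,p),(p,a),(p,b)} \<union> {(g,a)})"
  proof -
    have key: "\<And>x y. (x,y) \<in> A - {(g,p),(p,b),(p,a)} \<union> {(g,b)} \<longleftrightarrow>
          (sw a b x, sw a b y) \<in> A - {(g,p),(p,a),(p,b)} \<union> {(g,a)}"
      unfolding sw_def using d n by auto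
    show ?thesis
    proof (rule set_eqI)
      fix z :: "'a \<times> 'a"
      show "z \<in> A - {(g,p),(p,b),(p,a)} \<union> {(g,b)} \<longleftrightarrow> z \<in> map_prod (sw a b) (sw a b) ` (A - {(g,p),(p,a),(p,b)} \<union> {(g,a)})"
      proof (cases z)
        case (Pair x y)
        show ?thesis unfolding Pair by (simp only: key sw_img2)
      qed
    qed
  qed
  show ?thesis unfolding redF_def rn_def fst_conv snd_conv using V A
    by (metis insert_commute)
qed



lemma dia_CC:
  assumes c1: "CH V A a b p g" and c2: "CH V A c d p' g'"
  shows "redF V A c d p' g' = redF V A a b p g \<or> redF V A c d p' g' = rn (sw a b) (redF V A a b p g) \<or>
    (\<exists>N''. cherry_reduction (redF V A a b p g) N'' \<and> cherry_reduction (redF V A c d p' g') N'')"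
proof (cases "p = p'")
  case True
  note d1 = CH_D[OF c1] and d2 = CH_D[OF c2]
  have "(p,c) \<in> A" "(p,d) \<in> A" using d2(7,8) True by simp_all
  then have cd: "c = a \<or> c = b" "d = a \<or> d = b" using d1(9) by simp_all
  have gg: "g' = g" using d1(10)[of g'] d2(10)[of g'] True by simp
  show ?thesis
  proof (cases "d = b")
    case True
    then have "c = a" using cd d2(1) by auto
    then show ?thesis using True \<open>p = p'\<close> gg by simp
  next
    case False
    then have "d = a" "c = b" using cd d2(1) by auto
    then show ?thesis using swap_red[OF c1] \<open>p = p'\<close> gg by simp
  qed
next
  case False
  note d1 = CH_D[OF c1] and d2 = CH_D[OF c2] and n1 = CH_dist[OF c1] and n2 = CH_dist[OF c2]
  have e1: "(p,a) \<in> A" "(p,b) \<in> A" "(g,p) \<in> A" using d1 by simp_all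
  have e2: "(p',c) \<in> A" "(p',d) \<in> A" "(g',p') \<in> A" using d2 by simp_all
  have x1: "a \<noteq> c" using e1(1) d2(7) False by metis
  have x2: "a \<noteq> d" using e1(1) d2(8) False by metis
  have x3: "b \<noteq> c" using e1(2) d2(7) False by metis
  have x4: "b \<noteq> d" using e1(2) d2(8) False by metis
  have x5: "a \<noteq> p'" using e2(1) d1(5) by metis
  have x6: "b \<noteq> p'" using e2(1) d1(6) by metis
  have x7: "p \<noteq> c" using e1(1) d2(5) by metis
  have x8: "p \<noteq> d" using e1(1) d2(6) by metis
  have x9: "g \<noteq> c" using e1(3) d2(5) by metis
  have x10: "g \<noteq> d" using e1(3) d2(6) by metis
  have x11: "g \<noteq> p'" using e1(3) e1(1) d2(9) d2(5) d2(6) by metis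
  have x12: "g' \<noteq> a" using e2(3) d1(5) by metis
  have x13: "g' \<noteq> b" using e2(3) d1(6) by metis
  have x14: "g' \<noteq> p" using e2(3) e2(1) d1(9) d1(5) d1(6) by metis
  note x = x1 x2 x3 x4 x5 x6 x7 x8 x9 x10 x11 x12 x13 x14 False
  define M where "M = redF V A a b p g"
  define N' where "N' = redF V A c d p' g'"
  have M: "M = (V - {b,p}, A - {(g,p),(p,a),(p,b)} \<union> {(g,a)})" unfolding M_def redF_def ..
  have N': "N' = (V - {d,p'}, A - {(g',p'),(p',c),(p',d)} \<union> {(g',c)})" unfolding N'_def redF_def ..
  have cM: "CH (V - {b,p}) (A - {(g,p),(p,a),(p,b)} \<union> {(g,a)}) c d p' g'"
  proof (rule CH_mono[OF c2])
    show "{c, d, p'} \<subseteq> V - {b, p}" using d2(2,3,4) x by auto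
    fix x y assume "x \<in> {c, d, p'} \<or> y \<in> {c, d, p'}"
    then show "((x, y) \<in> A - {(g,p),(p,a),(p,b)} \<union> {(g,a)}) = ((x, y) \<in> A)"
      by (rule agree[rotated]) (use x in auto)
  qed
  have cN: "CH (V - {d,p'}) (A - {(g',p'),(p',c),(p',d)} \<union> {(g',c)}) a b p g"
  proof (rule CH_mono[OF c1])
    show "{a, b, p} \<subseteq> V - {d, p'}" using d1(2,3,4) x by auto
    fix x y assume "x \<in> {a, b, p} \<or> y \<in> {a, b, p}"
    then show "((x, y) \<in> A - {(g',p'),(p',c),(p',d)} \<union> {(g',c)}) = ((x, y) \<in> A)"
      by (rule agree[rotated]) (use x in auto)
  qed
  have eq: "redF (V - {b,p}) (A - {(g,p),(p,a),(p,b)} \<union> {(g,a)}) c d p' g' =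
            redF (V - {d,p'}) (A - {(g',p'),(p',c),(p',d)} \<union> {(g',c)}) a b p g"
    unfolding redF_def using x by auto
  have "cherry_reduction M (redF (V - {b,p}) (A - {(g,p),(p,a),(p,b)} \<union> {(g,a)}) c d p' g')"
    unfolding M by (rule CH_cr[OF cM])
  moreover have "cherry_reduction N' (redF (V - {b,p}) (A - {(g,p),(p,a),(p,b)} \<union> {(g,a)}) c d p' g')"
    unfolding N' eq by (rule CH_cr[OF cN])
  ultimately show ?thesis unfolding M_def N'_def by blast
qed

lemma dia_CR:
  assumes c1: "CH V A a b p g" and c2: "RC V A c d pc pd gc q"
  shows "\<exists>N''. cherry_reduction (redF V A a b p g) N'' \<and> cherry_reduction (cutF V A c d pc pd gc q) N''"
proof -
  note d1 = CH_D[OF c1] and d2 = RC_D[OF c2] and n1 = CH_dist[OF c1] and n2 = RC_dist[OF c2]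
  have e1: "(p,a) \<in> A" "(p,b) \<in> A" "(g,p) \<in> A" using d1 by simp_all
  have e2: "(pc,c) \<in> A" "(pc,pd) \<in> A" "(pd,d) \<in> A" "(gc,pc) \<in> A" "(q,pd) \<in> A" using d2 by simp_all
  have y1: "p \<noteq> pc" using e2(2) e2(3) d1(9) d1(5) d1(6) by metis
  have y2: "p \<noteq> pd" using e1 e2(3) d2(14) d1(1) by metis
  have x1: "a \<noteq> c" using e1(1) d2(8) y1 by metis
  have x2: "a \<noteq> d" using e1(1) d2(9) y2 by metis
  have x3: "b \<noteq> c" using e1(2) d2(8) y1 by metis
  have x4: "b \<noteq> d" using e1(2) d2(9) y2 by metis
  have x5: "a \<noteq> pc" "b \<noteq> pc" using e2(1) d1(5,6) by metis+
  have x6: "a \<noteq> pd" "b \<noteq> pd" using e2(3) d1(5,6) by metis+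
  have x7: "p \<noteq> c" "p \<noteq> d" using e1(1) d2(6,7) by metis+
  have x8: "g \<noteq> c" "g \<noteq> d" using e1(3) d2(6,7) by metis+
  have x9: "g \<noteq> pc" using e1(3) d2(10) x7 y2 by metis
  have x10: "g \<noteq> pd" using e1(3) d2(14) x7 by metis
  have x11: "gc \<noteq> a" "gc \<noteq> b" using e2(4) d1(5,6) by metis+
  have x12: "gc \<noteq> p" using e2(4) d1(9) x5 by metis
  have x13: "q \<noteq> a" "q \<noteq> b" using e2(5) d1(5,6) by metis+
  have x14: "q \<noteq> p" using e2(5) d1(9) x6 by metis
  note x = y1 y2 x1 x2 x3 x4 x5 x6 x7 x8 x9 x10 x11 x12 x13 x14
  have cM: "RC (V - {b,p}) (A - {(g,p),(p,a),(p,b)} \<union> {(g,a)}) c d pc pd gc q"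
  proof (rule RC_mono[OF c2])
    show "{c, d, pc, pd} \<subseteq> V - {b, p}" using d2(2-5) x by auto
    fix x y assume "x \<in> {c, d, pc, pd} \<or> y \<in> {c, d, pc, pd}"
    then show "((x, y) \<in> A - {(g,p),(p,a),(p,b)} \<union> {(g,a)}) = ((x, y) \<in> A)"
      by (rule agree[rotated]) (use x in auto)
  qed
  have cN: "CH (V - {pc,pd}) (A - {(gc,pc),(pc,c),(pc,pd),(q,pd),(pd,d)} \<union> {(gc,c),(q,d)}) a b p g"
  proof (rule CH_mono[OF c1])
    show "{a, b, p} \<subseteq> V - {pc, pd}" using d1(2,3,4) x by auto
    fix x y assume "x \<in> {a, b, p} \<or> y \<in> {a, b, p}"
    then show "((x, y) \<in> A - {(gc,pc),(pc,c),(pc,pd),(q,pd),(pd,d)} \<union> {(gc,c),(q,d)}) = ((x, y) \<in> A)"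
      by (rule agree[rotated]) (use x in auto)
  qed
  have eq: "cutF (V - {b,p}) (A - {(g,p),(p,a),(p,b)} \<union> {(g,a)}) c d pc pd gc q =
            redF (V - {pc,pd}) (A - {(gc,pc),(pc,c),(pc,pd),(q,pd),(pd,d)} \<union> {(gc,c),(q,d)}) a b p g"
    unfolding redF_def cutF_def using x by auto
  have "cherry_reduction (redF V A a b p g) (cutF (V - {b,p}) (A - {(g,p),(p,a),(p,b)} \<union> {(g,a)}) c d pc pd gc q)"
    unfolding redF_def by (rule RC_cr[OF cM])
  moreover have "cherry_reduction (cutF V A c d pc pd gc q) (cutF (V - {b,p}) (A - {(g,p),(p,a),(p,b)} \<union> {(g,a)}) c d pc pd gc q)"
    unfolding eq unfolding cutF_def by (rule CH_cr[OF cN])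
  ultimately show ?thesis by blast
qed

lemma dia_RR:
  assumes c1: "RC V A a b pa pb ga qb" and c2: "RC V A c d pc pd gc qd"
  shows "cutF V A c d pc pd gc qd = cutF V A a b pa pb ga qb \<or>
    (\<exists>N''. cherry_reduction (cutF V A a b pa pb ga qb) N'' \<and> cherry_reduction (cutF V A c d pc pd gc qd) N'')"
proof -
  note d1 = RC_D[OF c1] and d2 = RC_D[OF c2] and n1 = RC_dist[OF c1] and n2 = RC_dist[OF c2]
  have e1: "(pa,a) \<in> A" "(pa,pb) \<in> A" "(pb,b) \<in> A" "(ga,pa) \<in> A" "(qb,pb) \<in> A" using d1 by simp_all
  have e2: "(pc,c) \<in> A" "(pc,pd) \<in> A" "(pd,d) \<in> A" "(gc,pc) \<in> A" "(qd,pd) \<in> A" using d2 by simp_all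
  show ?thesis
  proof (cases "pb = pd")
    case T1: True
    have db: "d = b" using e2(3) d1(14) T1 by simp
    show ?thesis
    proof (cases "pa = pc")
      case True
      have "c = a \<or> c = pb" using e2(1) d1(10) True by simp
      moreover have "c \<noteq> pb" using e1(3) d2(6) by metis
      ultimately have ca: "c = a" by simp
      have gg: "gc = ga" using e2(4) d1(11) True by simp
      have "qd = pa \<or> qd = qb" using e2(5) d1(12) T1 by simp
      then have qq: "qd = qb" using d2(13) True by simp
      show ?thesis using ca db gg qq True T1 by simp
    next
      case False
      have pcq: "pc = qb" using e2(2) d1(12) T1 False by simp
      have paq: "pa = qd" using e1(2) d2(12) T1 False by simp
      have x1: "a \<noteq> c" using e1(1) d2(8) False by metis
      have x2: "c \<noteq> b" using d2(1) db by simp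
      have x3: "ga \<noteq> pc" using e1(4) d2(10) e1(1) d2(6) n1(5) T1 by metis
      have x4: "gc \<noteq> pa" using e2(4) d1(10) e2(1) d1(6) n2(5) T1 by metis
      have x5: "ga \<noteq> c" using e1(4) d2(6) by metis
      have x6: "gc \<noteq> a" using e2(4) d1(6) by metis
      have x7: "pc \<noteq> a" "pc \<noteq> b" using e2(1) d1(6,7) by metis+
      have x8: "pa \<noteq> c" using e1(1) d2(6) by metis
      have x9: "pc \<noteq> pb" using n2(5) T1 by simp
      note x = x1 x2 x3 x4 x5 x6 x7 x8 x9 False n1 n2 d1(1) T1[symmetric]
      have cM: "CH (V - {pa,pb}) (A - {(ga,pa),(pa,a),(pa,pb),(pc,pb),(pb,b)} \<union> {(ga,a),(pc,b)}) c b pc gc"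
        unfolding CH_def using d1 d2 x db by auto
      have cN: "CH (V - {pc,pb}) (A - {(gc,pc),(pc,c),(pc,pb),(pa,pb),(pb,b)} \<union> {(gc,c),(pa,b)}) a b pa ga"
        unfolding CH_def using d1 d2 x db by auto
      have eq: "redF (V - {pa,pb}) (A - {(ga,pa),(pa,a),(pa,pb),(pc,pb),(pb,b)} \<union> {(ga,a),(pc,b)}) c b pc gc
        = redF (V - {pc,pb}) (A - {(gc,pc),(pc,c),(pc,pb),(pa,pb),(pb,b)} \<union> {(gc,c),(pa,b)}) a b pa ga"
        unfolding redF_def using x d1(9) by auto
      have M: "cutF V A a b pa pb ga qb = (V - {pa,pb}, A - {(ga,pa),(pa,a),(pa,pb),(pc,pb),(pb,b)} \<union> {(ga,a),(pc,b)})"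
        unfolding cutF_def pcq ..
      have N: "cutF V A c d pc pd gc qd = (V - {pc,pb}, A - {(gc,pc),(pc,c),(pc,pb),(pa,pb),(pb,b)} \<union> {(gc,c),(pa,b)})"
        unfolding cutF_def paq db T1 ..
      show ?thesis unfolding M N using CH_cr[OF cM] CH_cr[OF cN] eq by metis
    qed
  next
    case False
    have y1: "pa \<noteq> pc" using e2(2) d1(10) e2(3) d1(6) False by metis
    have y2: "pa \<noteq> pd" using e1(1) e1(2) d2(14) n1(2) by metis
    have y3: "pb \<noteq> pc" using e2(1) e2(2) d1(14) n2(2) by metis
    have x1: "a \<noteq> c" "a \<noteq> d" using e1(1) d2(8,9) y1 y2 by metis+
    have x2: "b \<noteq> c" "b \<noteq> d" using e1(3) d2(8,9) y3 False by metis+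
    have x3: "a \<noteq> pc" "a \<noteq> pd" "b \<noteq> pc" "b \<noteq> pd" using e2(1,3) d1(6,7) by metis+
    have x4: "c \<noteq> pa" "c \<noteq> pb" "d \<noteq> pa" "d \<noteq> pb" using e1(1,3) d2(6,7) by metis+
    have x5: "ga \<noteq> c" "ga \<noteq> d" "qb \<noteq> c" "qb \<noteq> d" using e1(4,5) d2(6,7) by metis+
    have x6: "gc \<noteq> a" "gc \<noteq> b" "qd \<noteq> a" "qd \<noteq> b" using e2(4,5) d1(6,7) by metis+
    have x7: "ga \<noteq> pc" using e1(4) d2(10) x4 y2 by metis
    have x8: "ga \<noteq> pd" using e1(4) d2(14) x4 by metis
    have x9: "qb \<noteq> pc" using e1(5) d2(10) x4 False by metis
    have x10: "qb \<noteq> pd" using e1(5) d2(14) x4 by metis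
    have x11: "gc \<noteq> pa" using e2(4) d1(10) x3 y3 by metis
    have x12: "gc \<noteq> pb" using e2(4) d1(14) x3 by metis
    have x13: "qd \<noteq> pa" using e2(5) d1(10) x3 False by metis
    have x14: "qd \<noteq> pb" using e2(5) d1(14) x3 by metis
    note x = y1 y2 y3 x1 x2 x3 x4 x5 x6 x7 x8 x9 x10 x11 x12 x13 x14 False
    have cM: "RC (V - {pa,pb}) (A - {(ga,pa),(pa,a),(pa,pb),(qb,pb),(pb,b)} \<union> {(ga,a),(qb,b)}) c d pc pd gc qd"
    proof (rule RC_mono[OF c2])
      show "{c, d, pc, pd} \<subseteq> V - {pa, pb}" using d2(2-5) x by auto
      fix x y assume "x \<in> {c, d, pc, pd} \<or> y \<in> {c, d, pc, pd}"
      then show "((x, y) \<in> A - {(ga,pa),(pa,a),(pa,pb),(qb,pb),(pb,b)} \<union> {(ga,a),(qb,b)}) = ((x, y) \<in> A)"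
        by (rule agree[rotated]) (use x in auto)
    qed
    have cN: "RC (V - {pc,pd}) (A - {(gc,pc),(pc,c),(pc,pd),(qd,pd),(pd,d)} \<union> {(gc,c),(qd,d)}) a b pa pb ga qb"
    proof (rule RC_mono[OF c1])
      show "{a, b, pa, pb} \<subseteq> V - {pc, pd}" using d1(2-5) x by auto
      fix x y assume "x \<in> {a, b, pa, pb} \<or> y \<in> {a, b, pa, pb}"
      then show "((x, y) \<in> A - {(gc,pc),(pc,c),(pc,pd),(qd,pd),(pd,d)} \<union> {(gc,c),(qd,d)}) = ((x, y) \<in> A)"
        by (rule agree[rotated]) (use x in auto)
    qed
    have eq: "cutF (V - {pa,pb}) (A - {(ga,pa),(pa,a),(pa,pb),(qb,pb),(pb,b)} \<union> {(ga,a),(qb,b)}) c d pc pd gc qd =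
              cutF (V - {pc,pd}) (A - {(gc,pc),(pc,c),(pc,pd),(qd,pd),(pd,d)} \<union> {(gc,c),(qd,d)}) a b pa pb ga qb"
      unfolding cutF_def using x by auto
    have "cherry_reduction (cutF V A a b pa pb ga qb) (cutF (V - {pa,pb}) (A - {(ga,pa),(pa,a),(pa,pb),(qb,pb),(pb,b)} \<union> {(ga,a),(qb,b)}) c d pc pd gc qd)"
      unfolding cutF_def[of V] by (rule RC_cr[OF cM])
    moreover have "cherry_reduction (cutF V A c d pc pd gc qd) (cutF (V - {pa,pb}) (A - {(ga,pa),(pa,a),(pa,pb),(qb,pb),(pb,b)} \<union> {(ga,a),(qb,b)}) c d pc pd gc qd)"
      unfolding eq unfolding cutF_def[of V] by (rule RC_cr[OF cN])
    ultimately show ?thesis by blast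
  qed
qed



lemma single_no_cr: "cherry_reduction ({x},{}) N' \<Longrightarrow> False"
  unfolding cherry_reduction_def is_cherry_def is_ret_cherry_def leaves_def by auto

lemma cr_phylo:
  assumes "phylo_network N" "cherry_reduction N N'"
  shows "phylo_network N'"
proof -
  obtain V A where N: "N = (V,A)" by fastforce
  from assms(1)[unfolded N phylo_iff] show ?thesis
  proof (elim disjE exE conjE)
    fix x assume "V = {x}" "A = {}"
    then have "cherry_reduction ({x},{}) N'" using assms(2) N by simp
    then have False by (rule single_no_cr)
    then show ?thesis ..
  next
    fix r assume P: "PN V A r"
    from classify[OF P assms(2)[unfolded N]] show ?thesis
    proof (elim disjE exE conjE)
      fix a b p g assume c: "CH V A a b p g" and e: "N' = redF V A a b p g"
      have "PN (V - {b,p}) (A - {(g,p),(p,a),(p,b)} \<union> {(g,a)}) r" by (rule PN_red[OF P c])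
      then show ?thesis unfolding e redF_def phylo_iff by blast
    next
      fix a b pa pb ga q assume c: "RC V A a b pa pb ga q" and e: "N' = cutF V A a b pa pb ga q"
      have "PN (V - {pa,pb}) (A - {(ga,pa),(pa,a),(pa,pb),(q,pb),(pb,b)} \<union> {(ga,a),(q,b)}) r" by (rule PN_cut[OF P c])
      then show ?thesis unfolding e cutF_def phylo_iff by blast
    next
      fix a b assume e: "N' = ({a},{})"
      then show ?thesis unfolding e phylo_iff by blast
    qed
  qed
qed

lemma root_noCH:
  assumes "r \<noteq> a" "r \<noteq> b" "A = {(r,a),(r,b)}" "CH V A c d p g" shows False
proof -
  note d = CH_D[OF assms(4)]
  have "(g,p) \<in> A" "(p,c) \<in> A" using d by simp_all
  then show False using assms(1-3) by auto
qed

lemma root_noRC: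
  assumes "A = {(r,a),(r,b)}" "RC V A c d pc pd gc q" shows False
proof -
  note d = RC_D[OF assms(2)]
  have "(pc,pd) \<in> A" "(q,pd) \<in> A" using d by simp_all
  then show False using assms(1) d(13) by auto
qed

lemma diamond:
  assumes P: "PN V A r" and m: "cherry_reduction (V,A) M" and n: "cherry_reduction (V,A) N'"
  shows "M = N' \<or> (\<exists>f. bij f \<and> N' = rn f M) \<or> (\<exists>N''. cherry_reduction M N'' \<and> cherry_reduction N' N'')"
  using classify[OF P m]
proof (elim disjE exE conjE)
  fix a b p g assume c1: "CH V A a b p g" and M: "M = redF V A a b p g"
  from classify[OF P n] show ?thesis
  proof (elim disjE exE conjE)
    fix c d p' g' assume c2: "CH V A c d p' g'" and N: "N' = redF V A c d p' g'"
    from dia_CC[OF c1 c2] show ?thesis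
    proof (elim disjE)
      assume "redF V A c d p' g' = redF V A a b p g" then show ?thesis unfolding M N by (rule disjI1[OF sym])
    next
      assume "redF V A c d p' g' = rn (sw a b) (redF V A a b p g)" then show ?thesis unfolding M N
        using bij_sw by (intro disjI2 disjI1 exI[of _ "sw a b"] conjI)
    next
      assume "\<exists>N''. cherry_reduction (redF V A a b p g) N'' \<and> cherry_reduction (redF V A c d p' g') N''"
      then show ?thesis unfolding M N by (intro disjI2)
    qed
  next
    fix c d pc pd gc q assume c2: "RC V A c d pc pd gc q" and N: "N' = cutF V A c d pc pd gc q"
    obtain N'' where "cherry_reduction (redF V A a b p g) N''" "cherry_reduction (cutF V A c d pc pd gc q) N''"
      using dia_CR[OF c1 c2] by blast
    then show ?thesis unfolding M N by (intro disjI2 exI[of _ N''] conjI)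
  next
    fix c d assume h: "r \<noteq> c" "r \<noteq> d" "A = {(r,c),(r,d)}"
    have False by (rule root_noCH[OF h c1])
    then show ?thesis ..
  qed
next
  fix a b pa pb ga q assume c1: "RC V A a b pa pb ga q" and M: "M = cutF V A a b pa pb ga q"
  from classify[OF P n] show ?thesis
  proof (elim disjE exE conjE)
    fix c d p' g' assume c2: "CH V A c d p' g'" and N: "N' = redF V A c d p' g'"
    obtain N'' where "cherry_reduction (redF V A c d p' g') N''" "cherry_reduction (cutF V A a b pa pb ga q) N''"
      using dia_CR[OF c2 c1] by blast
    then show ?thesis unfolding M N by (intro disjI2 exI[of _ N''] conjI)
  next
    fix c d pc pd gc q' assume c2: "RC V A c d pc pd gc q'" and N: "N' = cutF V A c d pc pd gc q'"
    from dia_RR[OF c1 c2] show ?thesis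
    proof (elim disjE)
      assume "cutF V A c d pc pd gc q' = cutF V A a b pa pb ga q" then show ?thesis unfolding M N by (rule disjI1[OF sym])
    next
      assume "\<exists>N''. cherry_reduction (cutF V A a b pa pb ga q) N'' \<and> cherry_reduction (cutF V A c d pc pd gc q') N''"
      then show ?thesis unfolding M N by (intro disjI2)
    qed
  next
    fix c d assume h: "A = {(r,c),(r,d)}"
    have False by (rule root_noRC[OF h c1])
    then show ?thesis ..
  qed
next
  fix a b assume h: "r \<noteq> a" "r \<noteq> b" "a \<noteq> b" "V = {r, a, b}" "A = {(r, a), (r, b)}" and M: "M = ({a}, {})"
  from classify[OF P n] show ?thesis
  proof (elim disjE exE conjE)
    fix c d p' g' assume c2: "CH V A c d p' g'"
    have False by (rule root_noCH[OF h(1,2,5) c2])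
    then show ?thesis ..
  next
    fix c d pc pd gc q' assume c2: "RC V A c d pc pd gc q'"
    have False by (rule root_noRC[OF h(5) c2])
    then show ?thesis ..
  next
    fix c d assume h2: "r \<noteq> c" "r \<noteq> d" "c \<noteq> d" "V = {r, c, d}" "A = {(r, c), (r, d)}" and N: "N' = ({c}, {})"
    have e: "N' = rn (sw a c) M" unfolding M N rn_def sw_def by simp
    show ?thesis by (rule disjI2, rule disjI1, rule exI[of _ "sw a c"], rule conjI[OF bij_sw e])
  qed
qed



lemma mA_mem: "bij f \<Longrightarrow> (f x, f y) \<in> map_prod f f ` A \<longleftrightarrow> (x,y) \<in> A"
proof
  assume b: "bij f" and "(f x, f y) \<in> map_prod f f ` A"
  then obtain u v where "(u,v) \<in> A" "f x = f u" "f y = f v" by auto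
  moreover have "inj f" using b bij_is_inj by blast
  ultimately show "(x,y) \<in> A" by (metis injD)
qed auto

lemma all_fI: "bij f \<Longrightarrow> (\<And>x. P (f x)) \<Longrightarrow> \<forall>w. P w"
  by (metis bij_pointE)

lemma CH_rn:
  assumes b: "bij f" and c: "CH V A a b p g"
  shows "CH (f`V) (map_prod f f ` A) (f a) (f b) (f p) (f g)"
proof -
  note d = CH_D[OF c]
  have i: "inj f" using b bij_is_inj by blast
  have m: "\<And>x y. (f x, f y) \<in> map_prod f f ` A \<longleftrightarrow> (x,y) \<in> A" by (rule mA_mem[OF b])
  have e: "\<And>x y. f x = f y \<longleftrightarrow> x = y" using i by (simp add: inj_eq)
  have v: "\<And>x. f x \<in> f ` V \<longleftrightarrow> x \<in> V" using i by (simp add: inj_image_mem_iff)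
  show ?thesis unfolding CH_def
    apply (intro conjI all_fI[OF b])
    apply (simp_all only: m e v)
    using d by simp_all
qed

lemma RC_rn:
  assumes b: "bij f" and c: "RC V A a b pa pb ga q"
  shows "RC (f`V) (map_prod f f ` A) (f a) (f b) (f pa) (f pb) (f ga) (f q)"
proof -
  note d = RC_D[OF c]
  have i: "inj f" using b bij_is_inj by blast
  have m: "\<And>x y. (f x, f y) \<in> map_prod f f ` A \<longleftrightarrow> (x,y) \<in> A" by (rule mA_mem[OF b])
  have e: "\<And>x y. f x = f y \<longleftrightarrow> x = y" using i by (simp add: inj_eq)
  have v: "\<And>x. f x \<in> f ` V \<longleftrightarrow> x \<in> V" using i by (simp add: inj_image_mem_iff)
  show ?thesis unfolding RC_def
    apply (intro conjI all_fI[OF b])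
    apply (simp_all only: m e v)
    using d by simp_all
qed

lemma inj_mp: "inj f \<Longrightarrow> inj (map_prod f f)"
  unfolding inj_def by auto

lemma rn_redF: "bij f \<Longrightarrow> rn f (redF V A a b p g) = redF (f`V) (map_prod f f ` A) (f a) (f b) (f p) (f g)"
  unfolding rn_def redF_def using bij_is_inj[of f] inj_mp[of f]
  by (simp add: image_set_diff image_Un)

lemma rn_cutF: "bij f \<Longrightarrow> rn f (cutF V A a b pa pb ga q) = cutF (f`V) (map_prod f f ` A) (f a) (f b) (f pa) (f pb) (f ga) (f q)"
  unfolding rn_def cutF_def using bij_is_inj[of f] inj_mp[of f]
  by (simp add: image_set_diff image_Un)

lemma rn_cr:
  assumes b: "bij f" and ph: "phylo_network N" and c: "cherry_reduction N N'"
  shows "cherry_reduction (rn f N) (rn f N')"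
proof -
  obtain V A where N: "N = (V,A)" by fastforce
  from ph[unfolded N phylo_iff] show ?thesis
  proof (elim disjE exE conjE)
    fix x assume "V = {x}" "A = {}"
    then have "cherry_reduction ({x},{}) N'" using c N by simp
    then have False by (rule single_no_cr)
    then show ?thesis ..
  next
    fix r assume P: "PN V A r"
    from classify[OF P c[unfolded N]] show ?thesis
    proof (elim disjE exE conjE)
      fix a b p g assume h: "CH V A a b p g" and e: "N' = redF V A a b p g"
      have "rn f N = (f`V, map_prod f f ` A)" unfolding N rn_def by simp
      then show ?thesis unfolding e rn_redF[OF b] using CH_cr[OF CH_rn[OF b h]] by simp
    next
      fix a b pa pb ga q assume h: "RC V A a b pa pb ga q" and e: "N' = cutF V A a b pa pb ga q"
      have "rn f N = (f`V, map_prod f f ` A)" unfolding N rn_def by simp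
      then show ?thesis unfolding e rn_cutF[OF b] using RC_cr[OF RC_rn[OF b h]] by simp
    next
      fix a b assume h: "r \<noteq> a" "r \<noteq> b" "a \<noteq> b" "V = {r, a, b}" "A = {(r, a), (r, b)}" and e: "N' = ({a}, {})"
      have i: "inj f" using b bij_is_inj by blast
      have h': "f r \<noteq> f a" "f r \<noteq> f b" "f a \<noteq> f b" using h(1-3) i by (simp_all add: inj_eq)
      have "rn f N = ({f r, f a, f b}, {(f r, f a), (f r, f b)})" unfolding N rn_def h(4,5) by simp
      moreover have "rn f N' = ({f a}, {})" unfolding e rn_def by simp
      ultimately show ?thesis unfolding cherry_reduction_def using root_red[OF h'] by metis
    qed
  qed
qed

lemma seq_phylo:
  assumes "phylo_network N" "cherry_reduction_seq N Ns k" "i \<le> k"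
  shows "phylo_network (Ns i)"
  using assms(3)
proof (induction i)
  case 0 then show ?case using assms(1,2) unfolding cherry_reduction_seq_def by simp
next
  case (Suc i)
  then have "phylo_network (Ns i)" by simp
  moreover have "cherry_reduction (Ns i) (Ns (Suc i))" using assms(2) Suc.prems
    unfolding cherry_reduction_seq_def by simp
  ultimately show ?case by (rule cr_phylo)
qed

lemma complete_rn:
  assumes b: "bij f" and ph: "phylo_network N" and c: "complete_seq N Ns k"
  shows "complete_seq (rn f N) (\<lambda>i. rn f (Ns i)) k"
proof -
  have s: "cherry_reduction_seq N Ns k" using c unfolding complete_seq_def by simp
  have "\<forall>i<k. cherry_reduction (rn f (Ns i)) (rn f (Ns (Suc i)))"
  proof (intro allI impI)
    fix i assume i: "i < k"
    have "phylo_network (Ns i)" using seq_phylo[OF ph s] i by simp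
    moreover have "cherry_reduction (Ns i) (Ns (Suc i))" using s i unfolding cherry_reduction_seq_def by simp
    ultimately show "cherry_reduction (rn f (Ns i)) (rn f (Ns (Suc i)))" by (rule rn_cr[OF b])
  qed
  moreover have "Ns 0 = N" using s unfolding cherry_reduction_seq_def by simp
  moreover have "single_vertex (rn f (Ns k))"
  proof -
    obtain v where "Ns k = ({v},{})" using c unfolding complete_seq_def single_vertex_def by blast
    then have "rn f (Ns k) = ({f v},{})" unfolding rn_def by simp
    then show ?thesis unfolding single_vertex_def by blast
  qed
  ultimately show ?thesis unfolding complete_seq_def cherry_reduction_seq_def by simp
qed

lemma key:
  "phylo_network N \<Longrightarrow> complete_seq N Ns k \<Longrightarrow> cherry_reduction N N' \<Longrightarrow> \<exists>Ns'. complete_seq N' Ns' (k - 1)"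
proof (induction k arbitrary: N Ns N')
  case 0
  then obtain v where "Ns 0 = ({v},{})" "Ns 0 = N" unfolding complete_seq_def single_vertex_def cherry_reduction_seq_def by blast
  then have "cherry_reduction ({v},{}) N'" using "0.prems"(3) by simp
  then have False by (rule single_no_cr)
  then show ?case ..
next
  case (Suc k)
  define M where "M = Ns 1"
  have s: "Ns 0 = N" "\<forall>i < Suc k. cherry_reduction (Ns i) (Ns (Suc i))" "single_vertex (Ns (Suc k))"
    using Suc.prems(2) unfolding complete_seq_def cherry_reduction_seq_def by simp_all
  have NM: "cherry_reduction N M" using s(1,2) unfolding M_def by force
  have phM: "phylo_network M" by (rule cr_phylo[OF Suc.prems(1) NM])
  have cM: "complete_seq M (\<lambda>i. Ns (Suc i)) k"
    unfolding complete_seq_def cherry_reduction_seq_def M_def using s by simp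
  obtain V A where N: "N = (V,A)" by fastforce
  from Suc.prems(1)[unfolded N phylo_iff] show ?case
  proof (elim disjE exE conjE)
    fix x assume "V = {x}" "A = {}"
    then have "cherry_reduction ({x},{}) N'" using Suc.prems(3) N by simp
    then have False by (rule single_no_cr)
    then show ?thesis ..
  next
    fix r assume P: "PN V A r"
    from diamond[OF P NM[unfolded N] Suc.prems(3)[unfolded N]] show ?thesis
    proof (elim disjE exE conjE)
      assume "M = N'" then show ?thesis using cM by auto
    next
      fix f assume "bij f" "N' = rn f M"
      then show ?thesis using complete_rn[OF _ phM cM] by auto
    next
      fix N'' assume m: "cherry_reduction M N''" and n: "cherry_reduction N' N''"
      obtain Ms where Ms: "complete_seq N'' Ms (k - 1)" using Suc.IH[OF phM cM m] by blast
      have "k \<noteq> 0"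
      proof
        assume "k = 0"
        then obtain v where "M = ({v},{})" using cM unfolding complete_seq_def single_vertex_def cherry_reduction_seq_def by auto
        then show False using m single_no_cr by simp
      qed
      define Ns' where "Ns' = (\<lambda>i. if i = 0 then N' else Ms (i - 1))"
      have ms: "Ms 0 = N''" "\<forall>i < k - 1. cherry_reduction (Ms i) (Ms (Suc i))" "single_vertex (Ms (k - 1))"
        using Ms unfolding complete_seq_def cherry_reduction_seq_def by simp_all
      have "\<forall>i < k. cherry_reduction (Ns' i) (Ns' (Suc i))"
      proof (intro allI impI)
        fix i assume i: "i < k"
        show "cherry_reduction (Ns' i) (Ns' (Suc i))"
        proof (cases i)
          case 0 then show ?thesis unfolding Ns'_def using n ms(1) by simp
        next
          case (Suc j) then show ?thesis unfolding Ns'_def using ms(2) i by simp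
        qed
      qed
      moreover have "single_vertex (Ns' k)" unfolding Ns'_def using ms(3) \<open>k \<noteq> 0\<close> by simp
      ultimately have "complete_seq N' Ns' k" unfolding complete_seq_def cherry_reduction_seq_def Ns'_def by simp
      then show ?thesis by auto
    qed
  qed
qed

theorem proposition4p1:
  fixes N :: "'v network" and Ns :: "nat \<Rightarrow> 'v network" and l :: nat
  assumes "orchard N"
    and "maximal_seq N Ns l"
  shows "complete_seq N Ns l"
proof -
  have ph: "phylo_network N" and o: "\<exists>Ms m. complete_seq N Ms m" using assms(1) unfolding orchard_def by auto
  have s: "cherry_reduction_seq N Ns l" and nc: "no_cherries (Ns l)" using assms(2) unfolding maximal_seq_def by auto
  have "\<forall>i \<le> l. \<exists>Ms m. complete_seq (Ns i) Ms m"
  proof (intro allI impI)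
    fix i assume "i \<le> l"
    then show "\<exists>Ms m. complete_seq (Ns i) Ms m"
    proof (induction i)
      case 0 then show ?case using o s unfolding cherry_reduction_seq_def by simp
    next
      case (Suc i)
      then obtain Ms m where "complete_seq (Ns i) Ms m" by auto
      moreover have "phylo_network (Ns i)" using seq_phylo[OF ph s] Suc.prems by simp
      moreover have "cherry_reduction (Ns i) (Ns (Suc i))" using s Suc.prems unfolding cherry_reduction_seq_def by simp
      ultimately show ?case using key by blast
    qed
  qed
  then obtain Ms m where c: "complete_seq (Ns l) Ms m" by blast
  have "single_vertex (Ns l)"
  proof (cases m)
    case 0 then show ?thesis using c unfolding complete_seq_def cherry_reduction_seq_def by (metis (no_types))
  next
    case (Suc m')
    then have "cherry_reduction (Ns l) (Ms 1)" using c unfolding complete_seq_def cherry_reduction_seq_def by force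
    then show ?thesis using nc unfolding cherry_reduction_def no_cherries_def by blast
  qed
  then show ?thesis using s unfolding complete_seq_def by simp
qed


end
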